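(* Let $\mathbb{R}^p=E^q\oplus E^{p-q}$ be a decomposition with $\dim E^q=q\ge1$ such that the image of $E^q$ in the torus $\mathbb{R}^p/\mathbb{Z}^p$ is dense, and fix a scalar product on $E^q$. Let $A\in\mathrm{GL}_p(\mathbb{Z})$ preserve $E^q$ and $E^{p-q}$ and assume that $A|_{E^q}$ is a similarity for the given scalar product. Then $A$ is semi-simple (diagonalizable over $\mathbb{C}$). In particular, every element of a subgroup $U\subset\mathrm{GL}_p(\mathbb{Z})$ all of whose elements have these properties is semi-simple. *)

theory Defs
  imports "HOL-Analysis.Analysis"
begin

definition integer_matrix :: "real^'n^'n \<Rightarrow> bool" where
  "integer_matrix A \<longleftrightarrow> (\<forall>i j. A $ i $ j \<in> \<int>)"

definition in_GL_Z :: "real^'n^'n \<Rightarrow> bool" where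
  "in_GL_Z A \<longleftrightarrow> integer_matrix A \<and>
     (\<exists>B. integer_matrix B \<and> A ** B = mat 1 \<and> B ** A = mat 1)"

definition integer_vector :: "real^'n \<Rightarrow> bool" where
  "integer_vector z \<longleftrightarrow> (\<forall>i. z $ i \<in> \<int>)"

text \<open>The image of E in the torus R^p/Z^p is dense iff E + Z^p is dense in R^p.\<close>
definition dense_in_torus :: "(real^'n) set \<Rightarrow> bool" where
  "dense_in_torus E \<longleftrightarrow> closure {x + z | x z. x \<in> E \<and> integer_vector z} = UNIV"

definition scalar_product_on :: "(real^'n) set \<Rightarrow> (real^'n \<Rightarrow> real^'n \<Rightarrow> real) \<Rightarrow> bool" where
  "scalar_product_on E B \<longleftrightarrow>
     (\<forall>x\<in>E. \<forall>y\<in>E. B x y = B y x) \<and>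
     (\<forall>x\<in>E. \<forall>y\<in>E. \<forall>z\<in>E. \<forall>a b. B (a *\<^sub>R x + b *\<^sub>R y) z = a * B x z + b * B y z) \<and>
     (\<forall>x\<in>E. x \<noteq> 0 \<longrightarrow> B x x > 0)"

definition similarity_on :: "(real^'n) set \<Rightarrow> (real^'n \<Rightarrow> real^'n \<Rightarrow> real) \<Rightarrow> real^'n^'n \<Rightarrow> bool" where
  "similarity_on E B A \<longleftrightarrow>
     (\<exists>c>0. \<forall>x\<in>E. \<forall>y\<in>E. B (A *v x) (A *v y) = c * B x y)"

definition diagonal_matrix :: "complex^'n^'n \<Rightarrow> bool" where
  "diagonal_matrix D \<longleftrightarrow> (\<forall>i j. i \<noteq> j \<longrightarrow> D $ i $ j = 0)"

definition complexify :: "real^'n^'n \<Rightarrow> complex^'n^'n" where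
  "complexify A = (\<chi> i j. complex_of_real (A $ i $ j))"

definition semisimple :: "real^'n^'n \<Rightarrow> bool" where
  "semisimple A \<longleftrightarrow>
     (\<exists>P D :: complex^'n^'n. invertible P \<and> diagonal_matrix D \<and> complexify A ** P = P ** D)"

end

theory Submission
  imports Defs "Jordan_Normal_Form.Jordan_Normal_Form_Existence" "Jordan_Normal_Form.Jordan_Normal_Form_Uniqueness"
    "HOL-Computational_Algebra.Field_as_Ring" "HOL-Computational_Algebra.Polynomial_Factorial"
begin

no_notation Matrix.vec_index (infixl "$" 100)
hide_const (open) Matrix.mat VectorSpace.subspace

lemmas cvec_eq_iff = Finite_Cartesian_Product.vec_eq_iff

definition ix :: "nat \<Rightarrow> 'n::finite" where
  "ix = (SOME h. bij_betw h {0..<CARD('n)} (UNIV::'n set))"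

lemma ix_bij: "bij_betw (ix :: nat \<Rightarrow> 'n::finite) {0..<CARD('n)} UNIV"
proof -
  have "\<exists>h. bij_betw h {0..<CARD('n)} (UNIV::'n set)"
    using ex_bij_betw_nat_finite[of "UNIV::'n set"] by auto
  then show ?thesis unfolding ix_def by (rule someI_ex)
qed

definition xi :: "'n::finite \<Rightarrow> nat" where
  "xi = inv_into {0..<CARD('n)} ix"

lemma xi_ix[simp]: "i < CARD('n::finite) \<Longrightarrow> xi (ix i :: 'n) = i"
  unfolding xi_def using ix_bij[where 'n='n] by (simp add: bij_betw_def)

lemma ix_xi[simp]: "ix (xi (a::'n::finite)) = a"
  unfolding xi_def using ix_bij[where 'n='n] by (simp add: bij_betw_def f_inv_into_f)

lemma xi_less[simp]: "xi (a::'n::finite) < CARD('n)"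
  unfolding xi_def using ix_bij[where 'n='n]
  by (metis atLeastLessThan_iff bij_betw_def inv_into_into UNIV_I)

lemma xi_inj: "xi (a::'n::finite) = xi b \<longleftrightarrow> a = b"
  by (metis ix_xi)

lemma ix_inj: "i < CARD('n::finite) \<Longrightarrow> j < CARD('n) \<Longrightarrow> (ix i :: 'n) = ix j \<longleftrightarrow> i = j"
  by (metis xi_ix)

lemma sum_ix: "(\<Sum>k\<in>{0..<CARD('n::finite)}. g (ix k :: 'n)) = (\<Sum>a\<in>UNIV. g a)"
  using sum.reindex_bij_betw[OF ix_bij[where 'n='n], of g] .

definition toM :: "'a^'n^'n \<Rightarrow> 'a mat" where
  "toM M = Matrix.mat CARD('n::finite) CARD('n) (\<lambda>(i,j). M $ ix i $ ix j)"
definition fromM :: "'a mat \<Rightarrow> 'a^'n^'n" where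
  "fromM M = (\<chi> a b. M $$ (xi a, xi b))"
definition toV :: "'a^'n \<Rightarrow> 'a Matrix.vec" where
  "toV v = Matrix.vec CARD('n::finite) (\<lambda>i. v $ ix i)"
definition fromV :: "'a Matrix.vec \<Rightarrow> 'a^'n" where
  "fromV v = (\<chi> a. Matrix.vec_index v (xi a))"

lemma toM_carrier[simp]: "toM (M::'a^'n::finite^'n) \<in> carrier_mat CARD('n) CARD('n)"
  unfolding toM_def by simp
lemma toM_dim[simp]: "dim_row (toM (M::'a^'n::finite^'n)) = CARD('n)" "dim_col (toM M) = CARD('n)"
  unfolding toM_def by simp_all
lemma toM_index[simp]: "i < CARD('n::finite) \<Longrightarrow> j < CARD('n) \<Longrightarrow> toM (M::'a^'n^'n) $$ (i,j) = M $ ix i $ ix j"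
  unfolding toM_def by simp
lemma toV_carrier[simp]: "toV (v::'a^'n::finite) \<in> carrier_vec CARD('n)"
  unfolding toV_def by simp
lemma toV_dim[simp]: "dim_vec (toV (v::'a^'n::finite)) = CARD('n)"
  unfolding toV_def by simp
lemma toV_index[simp]: "i < CARD('n::finite) \<Longrightarrow> Matrix.vec_index (toV (v::'a^'n)) i = v $ ix i"
  unfolding toV_def by simp

lemma fromM_toM[simp]: "fromM (toM (M::'a^'n::finite^'n)) = M"
  unfolding fromM_def by (simp add: cvec_eq_iff)
lemma toM_fromM: "M \<in> carrier_mat CARD('n::finite) CARD('n) \<Longrightarrow> toM (fromM M :: 'a^'n^'n) = M"
  unfolding fromM_def by (intro eq_matI) auto
lemma fromV_toV[simp]: "fromV (toV (v::'a^'n::finite)) = v"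
  unfolding fromV_def by (simp add: cvec_eq_iff)
lemma toV_fromV: "v \<in> carrier_vec CARD('n::finite) \<Longrightarrow> toV (fromV v :: 'a^'n) = v"
  unfolding fromV_def by (intro eq_vecI) auto

lemma toM_mult: "toM ((M::'a::semiring_1^'n::finite^'n) ** N) = toM M * toM N"
proof (intro eq_matI)
  fix i j assume ij: "i < dim_row (toM M * toM N)" "j < dim_col (toM M * toM N)"
  then have i: "i < CARD('n)" and j: "j < CARD('n)" by auto
  have "(toM M * toM N) $$ (i,j) = (\<Sum>k\<in>{0..<CARD('n)}. M $ ix i $ ix k * N $ ix k $ ix j)"
    using i j by (simp add: scalar_prod_def)
  also have "\<dots> = (\<Sum>k\<in>UNIV. M $ ix i $ k * N $ k $ ix j)"
    by (rule sum_ix)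
  finally show "toM (M ** N) $$ (i,j) = (toM M * toM N) $$ (i,j)"
    using i j by (simp add: matrix_matrix_mult_def)
qed auto

lemma toV_mult: "toV ((M::'a::semiring_1^'n::finite^'n) *v v) = toM M *\<^sub>v toV v"
proof (intro eq_vecI)
  fix i assume "i < dim_vec (toM M *\<^sub>v toV v)"
  then have i: "i < CARD('n)" by auto
  have "Matrix.vec_index (toM M *\<^sub>v toV v) i = (\<Sum>k\<in>{0..<CARD('n)}. M $ ix i $ ix k * v $ ix k)"
    using i by (simp add: scalar_prod_def)
  also have "\<dots> = (\<Sum>k\<in>UNIV. M $ ix i $ k * v $ k)"
    by (rule sum_ix)
  finally show "Matrix.vec_index (toV (M *v v)) i = Matrix.vec_index (toM M *\<^sub>v toV v) i"
    using i by (simp add: matrix_vector_mult_def)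
qed auto

lemma fromM_mult: "A \<in> carrier_mat CARD('n::finite) CARD('n) \<Longrightarrow> B \<in> carrier_mat CARD('n) CARD('n) \<Longrightarrow>
  (fromM (A * B) :: 'a::semiring_1^'n^'n) = fromM A ** fromM B"
  by (metis fromM_toM toM_fromM toM_mult)

lemma toM_one: "toM (mat 1 :: 'a::semiring_1^'n::finite^'n) = 1\<^sub>m CARD('n)"
  by (intro eq_matI) (auto simp: Finite_Cartesian_Product.mat_def ix_inj)

lemma fromM_one: "(fromM (1\<^sub>m CARD('n::finite)) :: 'a::semiring_1^'n^'n) = mat 1"
  by (metis fromM_toM toM_one)


lemma toV_zero_iff: "toV (v::'a::zero^'n::finite) = 0\<^sub>v CARD('n) \<longleftrightarrow> v = 0"
proof
  assume "toV v = 0\<^sub>v CARD('n)"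
  then have "fromV (toV v) = (fromV (0\<^sub>v CARD('n)) :: 'a^'n)" by simp
  then show "v = 0" by (simp add: fromV_def cvec_eq_iff zero_vec_def)
next
  assume "v = 0" then show "toV v = 0\<^sub>v CARD('n)" by (intro eq_vecI) auto
qed




section \<open>Polynomials acting on vectors\<close>

definition vpoly :: "'a::comm_ring_1 poly \<Rightarrow> 'a^'n^'n \<Rightarrow> 'a^'n \<Rightarrow> 'a^'n" where
  "vpoly p M v = fold_coeffs (\<lambda>a w. a *s v + M *v w) p 0"

lemma mv_smult: "(M::'a::comm_ring_1^'n^'m) *v (c *s v) = c *s (M *v v)"
  by (simp add: cvec_eq_iff matrix_vector_mult_def sum_distrib_left mult_ac)
lemma mv_add: "(M::'a::comm_ring_1^'n^'m) *v (u + v) = M *v u + M *v v"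
  by (simp add: matrix_vector_right_distrib)
lemma mv_zero: "(M::'a::comm_ring_1^'n^'m) *v 0 = 0"
  by (simp add: cvec_eq_iff matrix_vector_mult_def)

lemma vpoly_0[simp]: "vpoly 0 M v = 0"
  by (simp add: vpoly_def)

lemma vpoly_pCons[simp]: "vpoly (pCons a p) M v = a *s v + M *v vpoly p M v"
proof (cases "p = 0 \<and> a = 0")
  case True then show ?thesis by (simp add: vpoly_def mv_zero)
next
  case False
  then show ?thesis
    by (auto simp: vpoly_def fold_coeffs_pCons_not_0_0_eq fold_coeffs_pCons_coeff_not_0_eq)
qed

lemma vpoly_zero_vec[simp]: "vpoly p M 0 = 0"
  by (induct p) (auto simp: mv_zero)

lemma vpoly_add_vec: "vpoly p M (u + v) = vpoly p M u + vpoly p M v"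
  by (induct p) (simp_all add: mv_add vector_add_ldistrib add_ac)

lemma vpoly_smult_vec: "vpoly p M (c *s v) = c *s vpoly p M v"
  by (induct p) (simp_all add: mv_smult vector_add_ldistrib vector_smult_assoc mult.commute)

lemma vpoly_add: "vpoly (p + q) M v = vpoly p M v + vpoly q M v"
proof (induct p arbitrary: q)
  case 0 then show ?case by simp
next
  case (pCons a p)
  obtain b q' where q: "q = pCons b q'" by (cases q) auto
  have ih: "vpoly (p + q') M v = vpoly p M v + vpoly q' M v"
    using pCons(2)[of q'] by (simp add: add.commute)
  show ?case by (simp add: q ih mv_add vector_sadd_rdistrib add_ac)
qed

lemma vpoly_smult: "vpoly (Polynomial.smult c p) M v = c *s vpoly p M v"
  by (induct p) (simp_all add: mv_smult vector_add_ldistrib vector_smult_assoc mult.commute)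

lemma vpoly_mult: "vpoly (p * q) M v = vpoly p M (vpoly q M v)"
proof (induct p)
  case 0 then show ?case by simp
next
  case (pCons a p)
  have "pCons a p * q = Polynomial.smult a q + pCons 0 (p * q)" by (simp add: mult_pCons_left)
  then show ?case using pCons by (simp add: vpoly_add vpoly_smult)
qed

lemma vpoly_const[simp]: "vpoly [:c:] M v = c *s v"
  by (simp add: mv_zero)

lemma vpoly_linear: "vpoly [:-t, 1:] M v = M *v v - t *s v"
  by (simp add: mv_zero cvec_eq_iff)

lemma vpoly_commute_mat:
  assumes "M ** K = K ** M"
  shows "vpoly p M (K *v v) = K *v vpoly p M v"
  by (induct p) (simp_all add: mv_add mv_smult matrix_vector_mul_assoc assms)

lemma vpoly_commute:
  assumes "M ** K = K ** M"
  shows "vpoly p M (vpoly q K v) = vpoly q K (vpoly p M v)"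
proof (induct q)
  case 0 then show ?case by simp
next
  case (pCons a q)
  then show ?case
    by (simp add: vpoly_add_vec vpoly_smult_vec vpoly_commute_mat[OF assms])
qed

lemma vpoly_eigen:
  assumes "M *v w = t *s w"
  shows "vpoly p M w = poly p t *s w"
  by (induct p) (simp_all add: mv_smult assms vector_sadd_rdistrib vector_smult_assoc mult.commute)

lemma vpoly_self: "vpoly p M (M *v v) = M *v vpoly p M v"
  by (rule vpoly_commute_mat) simp




section \<open>Density and rational vectors\<close>

lemma rat_common_denom:
  fixes w :: "real^'n::finite"
  assumes "\<forall>i. w $ i \<in> \<rat>"
  shows "\<exists>d::int. d > 0 \<and> (\<forall>i. of_int d * w $ i \<in> \<int>)"
proof -
  have "\<forall>i. \<exists>b::int. b > 0 \<and> of_int b * w $ i \<in> \<int>"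
  proof
    fix i
    from assms have "w $ i \<in> \<rat>" by blast
    then show "\<exists>b::int. b > 0 \<and> of_int b * w $ i \<in> \<int>"
    proof (cases rule: Rats_cases')
      case (1 a b)
      then show ?thesis by (intro exI[of _ b]) auto
    qed
  qed
  then obtain b :: "'n \<Rightarrow> int" where b: "\<And>i. b i > 0" "\<And>i. of_int (b i) * w $ i \<in> \<int>"
    by metis
  define d where "d = (\<Prod>i\<in>UNIV. b i)"
  have "d > 0" unfolding d_def using b(1) by (simp add: prod_pos)
  moreover have "of_int d * w $ i \<in> \<int>" for i
  proof -
    have "d = b i * (\<Prod>k\<in>UNIV - {i}. b k)" unfolding d_def
      by (simp add: prod.remove)
    then have "of_int d * w $ i = of_int (\<Prod>k\<in>UNIV - {i}. b k) * (of_int (b i) * w $ i)"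
      by simp
    also have "\<dots> \<in> \<int>" by (rule Ints_mult[OF Ints_of_int b(2)])
    finally show ?thesis .
  qed
  ultimately show ?thesis by blast
qed

lemma half_not_Int: "(1/2::real) \<notin> \<int>"
proof
  assume "(1/2::real) \<in> \<int>"
  then obtain k where "(1/2::real) = of_int k" by (auto elim: Ints_cases)
  then have "real_of_int (2*k) = 1" by simp
  then have "2*k = 1" by linarith
  then show False by presburger
qed

lemma closed_int_level: "closed {v::real^'n::finite. z \<bullet> v \<in> \<int>}"
proof -
  have "closed ((\<lambda>v. z \<bullet> v) -` \<int>)"
    by (intro continuous_closed_vimage closed_Ints) (auto intro: continuous_intros)
  then show ?thesis by (simp add: vimage_def)
qed

lemma dense_rat_orth:
  fixes E :: "(real^'n::finite) set"
  assumes dense: "dense_in_torus E" and w: "\<forall>i. w $ i \<in> \<rat>" and orth: "\<forall>x\<in>E. w \<bullet> x = 0"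
  shows "w = 0"
proof (rule ccontr)
  assume w0: "w \<noteq> 0"
  obtain d::int where d: "d > 0" "\<forall>i. of_int d * w $ i \<in> \<int>" using rat_common_denom[OF w] by blast
  define z where "z = of_int d *\<^sub>R w"
  have zi: "z \<bullet> u \<in> \<int>" if "integer_vector u" for u
  proof -
    have "z \<bullet> u = (\<Sum>i\<in>UNIV. (of_int d * w $ i) * u $ i)"
      by (simp add: z_def inner_vec_def)
    also have "\<dots> \<in> \<int>"
      by (rule Ints_sum, rule Ints_mult) (use d(2) that in \<open>auto simp: integer_vector_def\<close>)
    finally show ?thesis .
  qed
  have zE: "z \<bullet> x = 0" if "x \<in> E" for x using orth that by (simp add: z_def)
  let ?S = "{v::real^'n. z \<bullet> v \<in> \<int>}"
  have "{x + u | x u. x \<in> E \<and> integer_vector u} \<subseteq> ?S"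
    using zE zi by (auto simp: inner_add_right)
  then have "closure {x + u | x u. x \<in> E \<and> integer_vector u} \<subseteq> ?S"
    by (intro closure_minimal closed_int_level)
  then have all: "\<And>v. z \<bullet> v \<in> \<int>" using dense unfolding dense_in_torus_def by auto
  have "z \<noteq> 0" using d(1) w0 by (simp add: z_def)
  then have zz: "z \<bullet> z > 0" by simp
  define v where "v = (1 / (2 * (z \<bullet> z))) *\<^sub>R z"
  have "z \<bullet> v = 1/2" using zz by (simp add: v_def)
  then show False using all[of v] half_not_Int by metis
qed

lemma Rats_sum': "(\<And>x. x \<in> A \<Longrightarrow> f x \<in> \<rat>) \<Longrightarrow> sum f A \<in> \<rat>"
  by (induct A rule: infinite_finite_induct) auto

lemma vpoly_rat:
  fixes M :: "real^'n::finite^'n"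
  assumes "\<And>i. coeff p i \<in> \<rat>" and "\<And>i j. M $ i $ j \<in> \<rat>" and "\<And>i. v $ i \<in> \<rat>"
  shows "vpoly p M v $ i \<in> \<rat>"
  using assms(1)
proof (induct p arbitrary: i)
  case 0 then show ?case by simp
next
  case (pCons a p)
  have a: "a \<in> \<rat>" using pCons(3)[of 0] by simp
  have p: "\<And>i. coeff p i \<in> \<rat>" using pCons(3)[of "Suc _"] by simp
  show ?case using pCons(2)[OF p] a assms(2,3)
    by (auto simp: matrix_vector_mult_def intro!: Rats_add Rats_mult Rats_sum')
qed

section \<open>Normality argument\<close>

lemma scalar_mult_real: "(c::real) *s (x::real^'n) = c *\<^sub>R x"
  by (simp add: cvec_eq_iff)

lemma vpoly_in_sub:
  fixes E :: "(real^'n::finite) set"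
  assumes sub: "subspace E" and ME: "\<And>x. x \<in> E \<Longrightarrow> M *v x \<in> E" and v: "v \<in> E"
  shows "vpoly p M v \<in> E"
proof (induct p)
  case 0 then show ?case using sub by (simp add: subspace_0)
next
  case (pCons a p)
  then show ?case using sub ME v
    by (simp add: scalar_mult_real subspace_add subspace_scale)
qed

locale bform =
  fixes E :: "(real^'n::finite) set" and B :: "real^'n \<Rightarrow> real^'n \<Rightarrow> real"
  assumes sub: "subspace E" and sp: "scalar_product_on E B"
begin

lemma sym: "x \<in> E \<Longrightarrow> y \<in> E \<Longrightarrow> B x y = B y x"
  using sp unfolding scalar_product_on_def by blast

lemma lin: "x \<in> E \<Longrightarrow> y \<in> E \<Longrightarrow> z \<in> E \<Longrightarrow> B (a *\<^sub>R x + b *\<^sub>R y) z = a * B x z + b * B y z"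
  using sp unfolding scalar_product_on_def by blast

lemma pos: "x \<in> E \<Longrightarrow> x \<noteq> 0 \<Longrightarrow> B x x > 0"
  using sp unfolding scalar_product_on_def by blast

lemma add1: "x \<in> E \<Longrightarrow> y \<in> E \<Longrightarrow> z \<in> E \<Longrightarrow> B (x + y) z = B x z + B y z"
  using lin[of x y z 1 1] by simp

lemma scale1: "x \<in> E \<Longrightarrow> z \<in> E \<Longrightarrow> B (a *\<^sub>R x) z = a * B x z"
  using lin[of x x z a 0] by simp

lemma zero1: assumes "z \<in> E" shows "B 0 z = 0"
proof -
  have "B ((0::real) *\<^sub>R 0) z = 0 * B 0 z" by (rule scale1) (use assms sub in \<open>auto simp: subspace_0\<close>)
  then show ?thesis by simp
qed

lemma zero2: assumes "z \<in> E" shows "B z 0 = 0"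
proof -
  have "B z 0 = B 0 z" using assms sub by (intro sym) (auto simp: subspace_0)
  then show ?thesis using zero1[OF assms] by simp
qed

lemma add2: "x \<in> E \<Longrightarrow> y \<in> E \<Longrightarrow> z \<in> E \<Longrightarrow> B z (x + y) = B z x + B z y"
  using add1 sym sub by (simp add: subspace_add)

lemma scale2: "x \<in> E \<Longrightarrow> z \<in> E \<Longrightarrow> B z (a *\<^sub>R x) = a * B z x"
  using scale1 sym sub by (simp add: subspace_scale)

lemma self_zero: "x \<in> E \<Longrightarrow> B x x = 0 \<Longrightarrow> x = 0"
  using pos by force

lemma adj_poly:
  assumes AE: "\<And>x. x \<in> E \<Longrightarrow> A *v x \<in> E" and KE: "\<And>x. x \<in> E \<Longrightarrow> K *v x \<in> E"
    and adj: "\<And>x y. x \<in> E \<Longrightarrow> y \<in> E \<Longrightarrow> B (A *v x) y = B x (K *v y)"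
    and x: "x \<in> E" and y: "y \<in> E"
  shows "B (vpoly p A x) y = B x (vpoly p K y)"
  using y
proof (induct p arbitrary: y)
  case 0 then show ?case using x by (simp add: zero1 zero2)
next
  case (pCons a p)
  have w: "vpoly p A x \<in> E" using vpoly_in_sub[OF sub AE x] .
  have w2: "vpoly p K y \<in> E" using vpoly_in_sub[OF sub KE pCons(3)] .
  have Ky: "K *v y \<in> E" using KE pCons(3) .
  have "B (vpoly (pCons a p) A x) y = a * B x y + B (A *v vpoly p A x) y"
    using x w AE pCons(3) sub by (simp add: scalar_mult_real add1 scale1 subspace_scale)
  also have "B (A *v vpoly p A x) y = B (vpoly p A x) (K *v y)" using adj w pCons(3) by blast
  also have "\<dots> = B x (vpoly p K (K *v y))" using pCons(2)[OF Ky] .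
  also have "vpoly p K (K *v y) = K *v vpoly p K y" by (rule vpoly_self)
  finally show ?case
    using x w2 KE pCons(3) sub by (simp add: scalar_mult_real add2 scale2 subspace_scale)
qed

lemma kill_step:
  assumes AE: "\<And>x. x \<in> E \<Longrightarrow> A *v x \<in> E" and KE: "\<And>x. x \<in> E \<Longrightarrow> K *v x \<in> E"
    and adj: "\<And>x y. x \<in> E \<Longrightarrow> y \<in> E \<Longrightarrow> B (A *v x) y = B x (K *v y)"
    and comm: "A ** K = K ** A"
    and x: "x \<in> E" and NN: "vpoly p A (vpoly p A x) = 0"
  shows "vpoly p A x = 0"
proof -
  define y where "y = vpoly p A x"
  have yE: "y \<in> E" unfolding y_def using vpoly_in_sub[OF sub AE x] .
  have Ny: "vpoly p A y = 0" using NN y_def by simp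
  have Ky: "vpoly p K y \<in> E" using vpoly_in_sub[OF sub KE yE] .
  have "B (vpoly p A (vpoly p K y)) y = B (vpoly p K y) (vpoly p K y)"
    by (rule adj_poly[OF AE KE adj Ky yE])
  moreover have "vpoly p A (vpoly p K y) = vpoly p K (vpoly p A y)"
    by (rule vpoly_commute[OF comm])
  ultimately have "B (vpoly p K y) (vpoly p K y) = 0" using Ny yE by (simp add: zero1)
  then have K0: "vpoly p K y = 0" using self_zero Ky by blast
  have "B (vpoly p A x) y = B x (vpoly p K y)" by (rule adj_poly[OF AE KE adj x yE])
  then have "B y y = 0" using K0 x by (simp add: y_def[symmetric] zero2)
  then show ?thesis using self_zero yE y_def by blast
qed

lemma kill:
  assumes AE: "\<And>x. x \<in> E \<Longrightarrow> A *v x \<in> E" and KE: "\<And>x. x \<in> E \<Longrightarrow> K *v x \<in> E"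
    and adj: "\<And>x y. x \<in> E \<Longrightarrow> y \<in> E \<Longrightarrow> B (A *v x) y = B x (K *v y)"
    and comm: "A ** K = K ** A"
    and x: "x \<in> E" and nil: "(vpoly p A ^^ k) x = 0"
  shows "vpoly p A x = 0"
  using x nil
proof (induct k arbitrary: x)
  case 0 then show ?case by simp
next
  case (Suc k)
  have NE: "vpoly p A x \<in> E" using vpoly_in_sub[OF sub AE Suc(2)] .
  have "(vpoly p A ^^ k) (vpoly p A x) = 0" using Suc(3) by (simp add: funpow_Suc_right del: funpow.simps)
  then have "vpoly p A (vpoly p A x) = 0" using Suc(1)[OF NE] by simp
  then show ?case using kill_step[OF AE KE adj comm Suc(2)] by blast
qed


end



section \<open>Triangular form gives nilpotency\<close>

definition Wk :: "'a::field^'n::finite^'n \<Rightarrow> nat \<Rightarrow> ('a^'n) set" where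
  "Wk P k = {P *v w | w. \<forall>a. k \<le> xi a \<longrightarrow> w $ a = 0}"

lemma Wk_add: "u \<in> Wk P k \<Longrightarrow> v \<in> Wk P k \<Longrightarrow> a *s u + v \<in> Wk P k"
proof -
  assume "u \<in> Wk P k" "v \<in> Wk P k"
  then obtain w1 w2 where "u = P *v w1" "\<forall>a. k \<le> xi a \<longrightarrow> w1 $ a = 0"
    "v = P *v w2" "\<forall>a. k \<le> xi a \<longrightarrow> w2 $ a = 0" unfolding Wk_def by blast
  then show ?thesis unfolding Wk_def
    by (intro CollectI exI[of _ "a *s w1 + w2"]) (simp add: mv_add mv_smult)
qed

lemma tri_nilpotent:
  fixes M P T Q :: "'a::field^'n::finite^'n"
  assumes MPTQ: "M = P ** T ** Q" and QP: "Q ** P = mat 1" and PQ: "P ** Q = mat 1"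
    and tri: "\<And>a b. xi b < xi a \<Longrightarrow> T $ a $ b = 0"
    and roots: "\<And>a. poly r (T $ a $ a) = 0"
  shows "(vpoly r M ^^ CARD('n)) v = 0"
proof -
  have MP: "M *v (P *v w) = P *v (T *v w)" for w :: "'a^'n"
  proof -
    have "M *v (P *v w) = P *v (T *v ((Q ** P) *v w))"
      unfolding MPTQ by (simp add: matrix_vector_mul_assoc matrix_mul_assoc)
    then show ?thesis using QP by (simp add: matrix_vector_mul_lid)
  qed
  have supp: "\<forall>a. k \<le> xi a \<longrightarrow> (T *v w) $ a = 0" if w: "\<forall>a. k \<le> xi a \<longrightarrow> w $ a = 0" for w :: "'a^'n" and k
  proof (intro allI impI)
    fix a :: 'n assume a: "k \<le> xi a"
    have "T $ a $ b * w $ b = 0" for b :: 'n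
    proof (cases "k \<le> xi b")
      case True then show ?thesis using w by simp
    next
      case False then show ?thesis using a tri[of b a] by simp
    qed
    then show "(T *v w) $ a = 0" by (simp add: matrix_vector_mult_def)
  qed
  have MW: "M *v u \<in> Wk P k" if uW: "u \<in> Wk P k" for u k
  proof -
    obtain w where u: "u = P *v w" and w: "\<forall>a. k \<le> xi a \<longrightarrow> w $ a = 0"
      using uW unfolding Wk_def by blast
    show ?thesis unfolding Wk_def u MP using supp[OF w] by blast
  qed
  have polyW: "vpoly h M u \<in> Wk P k" if "u \<in> Wk P k" for u k h
  proof (induct h)
    case 0
    show ?case unfolding Wk_def by (intro CollectI exI[of _ 0]) (simp add: mv_zero)
  next
    case (pCons a h)
    then show ?case using Wk_add[OF that MW[OF pCons(2)]] by simp
  qed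
  have stepW: "vpoly r M u \<in> Wk P k" if "u \<in> Wk P (Suc k)" "k < CARD('n)" for u k
  proof -
    define a0 :: 'n where "a0 = ix k"
    have xa0: "xi a0 = k" unfolding a0_def using that(2) by simp
    define t where "t = T $ a0 $ a0"
    have "poly r t = 0" unfolding t_def by (rule roots)
    then have "[:-t, 1:] dvd r" using poly_eq_0_iff_dvd by blast
    then obtain h where r: "r = [:-t, 1:] * h" by (rule dvdE)
    have hu: "vpoly h M u \<in> Wk P (Suc k)" by (rule polyW[OF that(1)])
    then obtain w where hw: "vpoly h M u = P *v w" and w: "\<forall>a. Suc k \<le> xi a \<longrightarrow> w $ a = 0"
      unfolding Wk_def by blast
    have "vpoly r M u = M *v (vpoly h M u) - t *s vpoly h M u"
      unfolding r vpoly_mult vpoly_linear ..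
    also have "\<dots> = P *v (T *v w - t *s w)"
      unfolding hw MP by (simp add: matrix_vector_mult_diff_distrib mv_smult)
    finally have eq: "vpoly r M u = P *v (T *v w - t *s w)" .
    have "\<forall>a. k \<le> xi a \<longrightarrow> (T *v w - t *s w) $ a = 0"
    proof (intro allI impI)
      fix a :: 'n assume a: "k \<le> xi a"
      show "(T *v w - t *s w) $ a = 0"
      proof (cases "xi a = k")
        case False
        then have "Suc k \<le> xi a" using a by simp
        then show ?thesis using supp[OF w] w by simp
      next
        case True
        then have aa0: "a = a0" using xa0 xi_inj by metis
        have tw: "T $ a0 $ b * w $ b = (if b = a0 then T $ a0 $ a0 * w $ a0 else 0)" for b :: 'n
        proof (cases "b = a0")
          case False
          then have "xi b \<noteq> k" using xa0 xi_inj by metis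
          then show ?thesis
          proof (cases "xi b < k")
            case True then show ?thesis using tri[of b a0] xa0 False by simp
          next
            case False then show ?thesis using w \<open>xi b \<noteq> k\<close> \<open>b \<noteq> a0\<close> by simp
          qed
        qed simp
        have "(T *v w) $ a0 = (\<Sum>b\<in>UNIV. T $ a0 $ b * w $ b)"
          by (simp add: matrix_vector_mult_def)
        also have "\<dots> = (\<Sum>b\<in>UNIV. if b = a0 then T $ a0 $ a0 * w $ a0 else 0)"
          by (rule sum.cong[OF refl]) (rule tw)
        also have "\<dots> = T $ a0 $ a0 * w $ a0" by simp
        finally have "(T *v w) $ a0 = T $ a0 $ a0 * w $ a0" .
        then show ?thesis using aa0 t_def by simp
      qed
    qed
    then show ?thesis unfolding eq Wk_def by blast
  qed
  have iter: "(vpoly r M ^^ m) v \<in> Wk P (CARD('n) - m)" if "m \<le> CARD('n)" for m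
    using that
  proof (induct m)
    case 0
    have "v = P *v (Q *v v)"
      using PQ by (simp add: matrix_vector_mul_assoc matrix_vector_mul_lid)
    moreover have "\<forall>a. CARD('n) \<le> xi a \<longrightarrow> (Q *v v) $ a = 0"
      using xi_less by (metis not_le)
    ultimately show ?case unfolding Wk_def funpow_0 diff_zero by blast
  next
    case (Suc m)
    then have "(vpoly r M ^^ m) v \<in> Wk P (Suc (CARD('n) - Suc m))"
      by (simp add: Suc_diff_Suc)
    from stepW[OF this] Suc(2) show ?case by simp
  qed
  have "(vpoly r M ^^ CARD('n)) v \<in> Wk P 0" using iter[of "CARD('n)"] by simp
  then obtain w where e: "(vpoly r M ^^ CARD('n)) v = P *v w" and w: "\<forall>a. w $ a = 0"
    unfolding Wk_def by auto
  have "w = 0" using w by (simp add: cvec_eq_iff)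
  then show ?thesis using e by (simp add: mv_zero)
qed




definition cvec :: "real^'n \<Rightarrow> complex^'n" where
  "cvec x = (\<chi> i. complex_of_real (x $ i))"

lemma complexify_mv: "complexify M *v cvec x = cvec (M *v x)"
  by (simp add: cvec_eq_iff matrix_vector_mult_def complexify_def cvec_def)

lemma vpoly_cvec:
  "vpoly (map_poly complex_of_real p) (complexify M) (cvec x) = cvec (vpoly p M x)"
proof (induct p)
  case 0 then show ?case by (simp add: cvec_def cvec_eq_iff)
next
  case (pCons a p)
  then show ?case
    by (simp add: map_poly_pCons complexify_mv) (simp add: cvec_def cvec_eq_iff)
qed

lemma funpow_cvec:
  "(vpoly (map_poly complex_of_real p) (complexify M) ^^ k) (cvec x) = cvec ((vpoly p M ^^ k) x)"
  by (induct k) (simp_all add: vpoly_cvec)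

lemma cvec_zero_iff: "cvec x = 0 \<longleftrightarrow> x = 0"
  by (simp add: cvec_def cvec_eq_iff)

lemma cvec_decomp: "v = cvec (\<chi> i. Re (v $ i)) + \<i> *s cvec (\<chi> i. Im (v $ i))"
  by (simp add: cvec_eq_iff cvec_def complex_eq_iff)

lemma of_real_of_rat_c: "complex_of_real (of_rat q) = of_rat q"
  by (cases q) (simp add: of_rat_rat)

section \<open>Squarefree part of a rational polynomial\<close>

lemma sqfree_part:
  fixes p :: "rat poly"
  assumes deg: "degree p > 0"
  shows "\<exists>r. rsquarefree (map_poly (of_rat :: rat \<Rightarrow> complex) r) \<and>
    (\<forall>z. poly (map_poly of_rat r) z = 0 \<longleftrightarrow> poly (map_poly (of_rat :: rat \<Rightarrow> complex) p) z = 0)"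
proof -
  interpret h: map_poly_idom_hom "of_rat :: rat \<Rightarrow> complex" ..
  define d where "d = gcd p (pderiv p)"
  define r where "r = p div d"
  define e where "e = pderiv p div d"
  define s where "s = fst (bezout_coefficients p (pderiv p))"
  define t where "t = snd (bezout_coefficients p (pderiv p))"
  have pr: "p = r * d" unfolding r_def d_def by simp
  have pe: "pderiv p = e * d" unfolding e_def d_def by simp
  have bez: "d = s * p + t * pderiv p" unfolding s_def t_def d_def
    by (simp add: bezout_coefficients_fst_snd)
  let ?h = "map_poly (of_rat :: rat \<Rightarrow> complex)"
  have hd: "?h (pderiv q) = pderiv (?h q)" for q by (rule of_rat_hom.map_poly_pderiv)
  have degh: "degree (?h p) = degree p" by (rule degree_map_poly) simp
  have "pderiv (?h p) \<noteq> 0" using deg degh by (simp add: pderiv_eq_0_iff)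
  moreover have "?h p = ?h r * ?h d" using pr h.hom_mult by metis
  moreover have "pderiv (?h p) = ?h e * ?h d" using pe h.hom_mult hd by metis
  moreover have "?h d = ?h s * ?h p + ?h t * pderiv (?h p)"
    using bez h.hom_mult h.hom_add hd by metis
  ultimately show ?thesis using poly_squarefree_decomp[of "?h p" "?h r" "?h d" "?h e" "?h s" "?h t"]
    by blast
qed

section \<open>Squarefree annihilator forces semisimple kernels\<close>

lemma smult_eq_0_iff: "(c::'a::field) *s (w::'a^'n) = 0 \<longleftrightarrow> c = 0 \<or> w = 0"
  by (auto simp: cvec_eq_iff)

lemma semisimple_kernel:
  fixes M :: "complex^'n::finite^'n" and r :: "complex poly"
  assumes sf: "rsquarefree r" and zero: "\<And>v. vpoly r M v = 0"
    and K2: "vpoly [:-l,1:] M (vpoly [:-l,1:] M v) = 0"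
  shows "vpoly [:-l,1:] M v = 0"
proof (rule ccontr)
  define w where "w = vpoly [:-l,1:] M v"
  assume "vpoly [:-l,1:] M v \<noteq> 0"
  then have w0: "w \<noteq> 0" unfolding w_def .
  have "vpoly [:-l,1:] M w = 0" using K2 unfolding w_def .
  then have "M *v w - l *s w = 0" unfolding vpoly_linear .
  then have eig: "M *v w = l *s w" by simp
  have "poly r l *s w = 0" using zero[of w] vpoly_eigen[OF eig] by simp
  then have rl: "poly r l = 0" using w0 smult_eq_0_iff by blast
  then have "[:-l,1:] dvd r" using poly_eq_0_iff_dvd by blast
  then obtain g where r: "r = [:-l,1:] * g" by (rule dvdE)
  have "poly (pderiv r) l = poly g l" unfolding r pderiv_mult poly_add poly_mult by (simp add: pderiv_pCons)
  then have gl: "poly g l \<noteq> 0" using sf rl unfolding rsquarefree_roots by metis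
  have "vpoly r M v = vpoly g M w" unfolding r w_def by (simp only: mult.commute[of "[:-l,1:]" g] vpoly_mult)
  also have "\<dots> = poly g l *s w" by (rule vpoly_eigen[OF eig])
  finally have "poly g l *s w = 0" using zero by simp
  then show False using gl w0 smult_eq_0_iff by blast
qed

lemma jordan_matrix_ones_diag:
  assumes "\<forall>x\<in>set n_as. fst x = 1"
  shows "i < sum_list (map fst n_as) \<Longrightarrow> j < sum_list (map fst n_as) \<Longrightarrow> i \<noteq> j
    \<Longrightarrow> jordan_matrix n_as $$ (i,j) = (0::'a::{zero,one})"
  using assms
proof (induct n_as arbitrary: i j)
  case Nil then show ?case by simp
next
  case (Cons x rest)
  obtain k a where x: "x = (k,a)" by force
  have k: "k = 1" using Cons(5) x by simp
  let ?s = "sum_list (map fst rest)"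
  have dims: "dim_row (jordan_block 1 a) = 1" "dim_col (jordan_block 1 a) = 1"
    "dim_row (jordan_matrix rest) = ?s" "dim_col (jordan_matrix rest) = ?s"
    using jordan_block_carrier[of 1 a] by auto
  have i: "i < 1 + ?s" and j: "j < 1 + ?s" using Cons(2,3) x k by auto
  show ?case
  proof (cases "i < 1")
    case True
    then show ?thesis using i j Cons(4) unfolding x k jordan_matrix_Cons
      by (simp add: dims)
  next
    case False
    then show ?thesis using i j Cons(1)[of "i - 1" "j - 1"] Cons(4,5) unfolding x k jordan_matrix_Cons
      by (auto simp: dims)
  qed
qed

lemma sum_list_min_eq:
  assumes "sum_list (map (\<lambda>n. min 1 n) xs) = sum_list (map (\<lambda>n. min 2 n) (xs::nat list))"
  shows "\<forall>n\<in>set xs. n \<le> 1"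
  using assms
proof (induct xs)
  case Nil then show ?case by simp
next
  case (Cons x xs)
  have le: "sum_list (map (\<lambda>n. min 1 n) xs) \<le> sum_list (map (\<lambda>n. min 2 n) xs)"
    by (rule sum_list_mono) simp
  have "min 1 x \<le> min 2 (x::nat)" by simp
  with Cons(2) le have "min 1 x = min 2 x" and
    "sum_list (map (\<lambda>n. min 1 n) xs) = sum_list (map (\<lambda>n. min 2 n) xs)" by simp_all
  then show ?case using Cons(1) by auto
qed

lemma kernel_dim_eq:
  assumes "A \<in> carrier_mat n n" "B \<in> carrier_mat n n" "mat_kernel A = mat_kernel B"
  shows "kernel_dim A = kernel_dim B"
  using assms unfolding kernel_dim_def by simp




lemma int_floor_real: "(a::real) \<in> \<int> \<Longrightarrow> of_int \<lfloor>a\<rfloor> = a"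
  by (metis Ints_cases floor_of_int)

lemma mat_scaleR_right: "(X::real^'n::finite^'n) ** (c *\<^sub>R Y) = c *\<^sub>R (X ** Y)"
  by (simp add: cvec_eq_iff matrix_matrix_mult_def sum_distrib_left mult_ac)

lemma mat_scaleR_left: "(c *\<^sub>R Y) ** (X::real^'n::finite^'n) = c *\<^sub>R (Y ** X)"
  by (simp add: cvec_eq_iff matrix_matrix_mult_def sum_distrib_left mult_ac)

lemma mat_mv: "mat l *v (v::'a::comm_ring_1^'n::finite) = l *s v"
proof -
  have "(mat l *v v) $ i = l * v $ i" for i
  proof -
    have "(mat l *v v) $ i = (\<Sum>j\<in>UNIV. (if i = j then l else 0) * v $ j)"
      by (simp add: matrix_vector_mult_def Finite_Cartesian_Product.mat_def)
    also have "\<dots> = (\<Sum>j\<in>UNIV. (if i = j then l * v $ j else 0))"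
      by (rule sum.cong) auto
    also have "\<dots> = l * v $ i" by simp
    finally show ?thesis .
  qed
  then show ?thesis by (simp add: cvec_eq_iff)
qed

lemma vpoly_sum_vec: "vpoly p M (sum f S) = (\<Sum>j\<in>S. vpoly p M (f j))"
  by (induct S rule: infinite_finite_induct) (simp_all add: vpoly_add_vec)

theorem mainTheorem14:
  fixes E E' :: "(real^'n) set"
    and B :: "real^'n \<Rightarrow> real^'n \<Rightarrow> real"
    and A :: "real^'n^'n"
  assumes "subspace E" and "subspace E'"
    and "E \<inter> E' = {0}" and "{x + y | x y. x \<in> E \<and> y \<in> E'} = UNIV"
    and "dim E \<ge> 1"
    and "dense_in_torus E"
    and "scalar_product_on E B"
    and "in_GL_Z A"
    and "(\<lambda>x. A *v x) ` E \<subseteq> E" and "(\<lambda>x. A *v x) ` E' \<subseteq> E'"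
    and "similarity_on E B A"
  shows "semisimple A"
proof -
  note sub = assms(1)
  interpret bf: bform E B using assms(1,7) by unfold_locales
  let ?n = "CARD('n)"
  from assms(8) obtain Ai where Aint: "integer_matrix A" and AAi: "A ** Ai = mat 1" and AiA: "Ai ** A = mat 1"
    unfolding in_GL_Z_def by blast
  have AE: "\<And>x. x \<in> E \<Longrightarrow> A *v x \<in> E" using assms(9) by blast
  have img: "(\<lambda>x. A *v x) ` E = E"
  proof (rule subspace_dim_equal)
    show "subspace ((\<lambda>x. A *v x) ` E)" using sub by (intro linear_subspace_image) auto
    show "(\<lambda>x. A *v x) ` E \<subseteq> E" by (rule assms(9))
    have "inj (\<lambda>x. A *v x)"
      by (rule injI) (metis matrix_vector_mul_assoc AiA matrix_vector_mul_lid)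
    then have "dim ((\<lambda>x. A *v x) ` E) = dim E"
      by (intro dim_image_eq) (auto intro: inj_on_subset)
    then show "dim E \<le> dim ((\<lambda>x. A *v x) ` E)" by simp
  qed (rule sub)
  have AiE: "Ai *v x \<in> E" if x: "x \<in> E" for x
  proof -
    from x img obtain y where y: "y \<in> E" "x = A *v y" by blast
    then have "Ai *v x = y" by (simp add: matrix_vector_mul_assoc AiA)
    then show ?thesis using y by simp
  qed
  from assms(11) obtain c where c: "c > 0" and sim: "\<And>x y. x \<in> E \<Longrightarrow> y \<in> E \<Longrightarrow> B (A *v x) (A *v y) = c * B x y"
    unfolding similarity_on_def by blast
  define K where "K = c *\<^sub>R Ai"
  have Kv: "K *v y = c *\<^sub>R (Ai *v y)" for y unfolding K_def by (simp add: scaleR_matrix_vector_assoc)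
  have KE: "\<And>x. x \<in> E \<Longrightarrow> K *v x \<in> E" using AiE sub by (simp add: Kv subspace_scale)
  have adj: "B (A *v x) y = B x (K *v y)" if x: "x \<in> E" and y: "y \<in> E" for x y
  proof -
    have "y = A *v (Ai *v y)" by (simp add: matrix_vector_mul_assoc AAi)
    then have "B (A *v x) y = B (A *v x) (A *v (Ai *v y))" by simp
    also have "\<dots> = c * B x (Ai *v y)" using sim x AiE[OF y] by blast
    also have "\<dots> = B x (K *v y)" using bf.scale2[OF AiE[OF y] x] by (simp add: Kv)
    finally show ?thesis .
  qed
  have comm: "A ** K = K ** A" unfolding K_def by (simp add: mat_scaleR_right mat_scaleR_left AAi AiA)

  define cA where "cA = complexify A"
  define cAJ where "cAJ = (toM cA :: complex mat)"
  have cAJc: "cAJ \<in> carrier_mat ?n ?n" by (simp add: cAJ_def)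
  define qA :: "rat mat" where "qA = Matrix.mat ?n ?n (\<lambda>(i,j). of_int \<lfloor>A $ ix i $ ix j\<rfloor>)"
  have qAc: "qA \<in> carrier_mat ?n ?n" by (simp add: qA_def)
  have Aent: "A $ i $ j \<in> \<int>" for i j using Aint unfolding integer_matrix_def by blast
  have mapq: "map_mat of_rat qA = cAJ"
  proof (rule eq_matI)
    fix i j assume ij: "i < dim_row cAJ" "j < dim_col cAJ"
    then have "i < ?n" "j < ?n" by (auto simp: cAJ_def)
    moreover have h: "complex_of_int \<lfloor>A $ ix i $ ix j\<rfloor> = complex_of_real (A $ ix i $ ix j)"
      using int_floor_real[OF Aent[of "ix i" "ix j"]] by (metis of_real_of_int_eq)
    ultimately show "map_mat of_rat qA $$ (i,j) = cAJ $$ (i,j)"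
      by (simp add: qA_def cAJ_def cA_def complexify_def h)
  qed (auto simp: qA_def cAJ_def)
  define pQ where "pQ = char_poly qA"
  have cp: "char_poly cAJ = map_poly of_rat pQ"
    unfolding pQ_def mapq[symmetric] by (rule of_rat_hom.char_poly_hom[OF qAc])
  have degp: "degree pQ > 0" using degree_monic_char_poly[OF qAc] unfolding pQ_def by simp
  obtain rQ where rQ: "rsquarefree (map_poly (of_rat :: rat \<Rightarrow> complex) rQ)"
    "\<And>z. poly (map_poly of_rat rQ) z = 0 \<longleftrightarrow> poly (map_poly (of_rat :: rat \<Rightarrow> complex) pQ) z = 0"
    using sqfree_part[OF degp] by blast
  define rC where "rC = map_poly (of_rat :: rat \<Rightarrow> complex) rQ"
  define rR where "rR = map_poly (of_rat :: rat \<Rightarrow> real) rQ"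
  have rCR: "rC = map_poly complex_of_real rR"
    unfolding rC_def rR_def by (simp add: map_poly_map_poly o_def of_real_of_rat_c)
  have rCroot: "poly rC z = 0 \<longleftrightarrow> poly (char_poly cAJ) z = 0" for z
    unfolding rC_def cp by (rule rQ(2))

  obtain as where "char_poly cAJ = (\<Prod>a\<leftarrow>as. [:- a, 1:])"
    using char_poly_factorized[OF cAJc] by blast
  from jordan_nf_exists[OF cAJc this] obtain n_as where jnf: "jordan_nf cAJ n_as" by blast
  define J where "J = (jordan_matrix n_as :: complex mat)"
  from jnf have sim_J: "similar_mat cAJ J" and n0: "0 \<notin> fst ` set n_as"
    unfolding jordan_nf_def J_def by auto
  then obtain P Q where wit: "similar_mat_wit cAJ J P Q" unfolding similar_mat_def by blast
  have dimr: "dim_row cAJ = ?n" by (simp add: cAJ_def)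
  have Pc: "P \<in> carrier_mat ?n ?n" and Jc: "J \<in> carrier_mat ?n ?n" and Qc: "Q \<in> carrier_mat ?n ?n"
    and PQ: "P * Q = 1\<^sub>m ?n" and QP: "Q * P = 1\<^sub>m ?n" and eqJ: "cAJ = P * J * Q"
    using wit unfolding similar_mat_wit_def Let_def dimr by auto
  have sumn: "sum_list (map fst n_as) = ?n" using Jc unfolding J_def by auto
  have Jup: "J $$ (i,j) = 0" if "i < ?n" "j < i" for i j
    unfolding J_def by (rule jordan_matrix_upper_triangular) (use that sumn in auto)
  have Jut: "upper_triangular J" using Jup Jc unfolding upper_triangular_def by auto
  have Jroot: "poly rC (J $$ (k,k)) = 0" if k: "k < ?n" for k
  proof -
    have "char_poly cAJ = char_poly J" by (rule char_poly_similar[OF sim_J])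
    also have "\<dots> = (\<Prod>a\<leftarrow>diag_mat J. [:- a, 1:])" by (rule char_poly_upper_triangular[OF Jc Jut])
    finally have ch: "char_poly cAJ = (\<Prod>a\<leftarrow>diag_mat J. [:- a, 1:])" .
    have mem: "J $$ (k,k) \<in> set (diag_mat J)" using k Jc unfolding diag_mat_def by auto
    have "poly (char_poly cAJ) (J $$ (k,k)) = 0"
      unfolding ch poly_prod_list prod_list_zero_iff using mem by force
    then show ?thesis using rCroot by blast
  qed

  define P' where "P' = (fromM P :: complex^'n^'n)"
  define J' where "J' = (fromM J :: complex^'n^'n)"
  define Q' where "Q' = (fromM Q :: complex^'n^'n)"
  have PJc: "P * J \<in> carrier_mat ?n ?n" using Pc Jc by auto
  have cAeq: "cA = P' ** J' ** Q'"
  proof -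
    have "cA = fromM cAJ" by (simp add: cAJ_def)
    also have "\<dots> = fromM (P * J) ** Q'" unfolding eqJ Q'_def by (rule fromM_mult[OF PJc Qc])
    also have "fromM (P * J) = P' ** J'" unfolding P'_def J'_def by (rule fromM_mult[OF Pc Jc])
    finally show ?thesis .
  qed
  have Q'P': "Q' ** P' = mat 1" unfolding Q'_def P'_def fromM_mult[OF Qc Pc, symmetric] QP fromM_one ..
  have P'Q': "P' ** Q' = mat 1" unfolding Q'_def P'_def fromM_mult[OF Pc Qc, symmetric] PQ fromM_one ..
  have J'idx: "J' $ a $ b = J $$ (xi a, xi b)" for a b unfolding J'_def fromM_def by simp
  have nilC: "(vpoly rC cA ^^ ?n) v = 0" for v
  proof (rule tri_nilpotent[OF cAeq Q'P' P'Q'])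
    show "J' $ a $ b = 0" if "xi b < xi a" for a b unfolding J'idx using Jup that xi_less by blast
    show "poly rC (J' $ a $ a) = 0" for a unfolding J'idx by (rule Jroot[OF xi_less])
  qed
  have nilR: "(vpoly rR A ^^ ?n) x = 0" for x
  proof -
    have "cvec ((vpoly rR A ^^ ?n) x) = (vpoly rC cA ^^ ?n) (cvec x)"
      unfolding rCR cA_def by (rule funpow_cvec[symmetric])
    then show ?thesis using nilC cvec_zero_iff by metis
  qed
  have killE: "vpoly rR A x = 0" if x: "x \<in> E" for x
    by (rule bf.kill[OF AE KE adj comm x nilR])

  (* density: vpoly rR A is zero everywhere *)
  define N where "N = (\<chi> i j. vpoly rR A (axis j 1) $ i)"
  have NN: "N *v x = vpoly rR A x" for x
  proof -
    have "vpoly rR A x = vpoly rR A (\<Sum>j\<in>UNIV. x $ j *s axis j 1)" by (simp add: basis_expansion)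
    also have "\<dots> = (\<Sum>j\<in>UNIV. x $ j *s vpoly rR A (axis j 1))"
      by (simp add: vpoly_sum_vec vpoly_smult_vec)
    finally show ?thesis by (simp add: cvec_eq_iff N_def matrix_vector_mult_def mult.commute)
  qed
  have Nrat: "N $ i $ j \<in> \<rat>" for i j
  proof -
    have "vpoly rR A (axis j 1) $ i \<in> \<rat>"
    proof (rule vpoly_rat)
      show "coeff rR k \<in> \<rat>" for k unfolding rR_def by (simp add: coeff_map_poly)
      show "A $ i $ j \<in> \<rat>" for i j using Aent Ints_subset_Rats by blast
      show "axis j 1 $ i \<in> \<rat>" for i by (simp add: axis_def)
    qed
    then show ?thesis by (simp add: N_def)
  qed
  have Nrow0: "N $ i = 0" for i
  proof (rule dense_rat_orth[OF assms(6)])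
    show "\<forall>j. N $ i $ j \<in> \<rat>" using Nrat by blast
    show "\<forall>x\<in>E. N $ i \<bullet> x = 0"
    proof
      fix x assume x: "x \<in> E"
      have "N $ i \<bullet> x = (N *v x) $ i" by (simp add: inner_vec_def matrix_vector_mult_def)
      then show "N $ i \<bullet> x = 0" using NN killE[OF x] by simp
    qed
  qed
  have zeroR: "vpoly rR A x = 0" for x
  proof -
    have "N = 0" using Nrow0 by (simp add: cvec_eq_iff)
    then show ?thesis using NN[of x] by simp
  qed
  have zeroC: "vpoly rC cA v = 0" for v
  proof -
    have "vpoly rC cA v = vpoly rC cA (cvec (\<chi> i. Re (v $ i)) + \<i> *s cvec (\<chi> i. Im (v $ i)))"
      using cvec_decomp[of v] by simp
    also have "\<dots> = 0"
      unfolding vpoly_add_vec vpoly_smult_vec unfolding rCR cA_def vpoly_cvec zeroR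
      by (simp add: cvec_def cvec_eq_iff)
    finally show ?thesis .
  qed
  have sfC: "rsquarefree rC" unfolding rC_def by (rule rQ(1))
  have kerC: "vpoly [:-l,1:] cA v = 0" if "vpoly [:-l,1:] cA (vpoly [:-l,1:] cA v) = 0" for l v
    by (rule semisimple_kernel[OF sfC zeroC that])

  have blocks: "k \<le> 1" if kl: "(k,l) \<in> set n_as" for k l
  proof -
    define Cm where "Cm = cA - mat l"
    have Cmv: "Cm *v v = vpoly [:-l,1:] cA v" for v
      unfolding Cm_def by (simp add: vpoly_linear matrix_vector_mult_diff_rdistrib mat_mv)
    have chm: "char_matrix cAJ l = toM Cm"
    proof (rule eq_matI)
      fix i j assume "i < dim_row (toM Cm)" "j < dim_col (toM Cm)"
      then have ij: "i < ?n" "j < ?n" by auto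
      then show "char_matrix cAJ l $$ (i,j) = toM Cm $$ (i,j)"
        by (simp add: char_matrix_def cAJ_def Cm_def Finite_Cartesian_Product.mat_def ix_inj)
    qed (auto simp: char_matrix_def cAJ_def)
    have pow2: "toM Cm ^\<^sub>m 2 = toM (Cm ** Cm)"
      by (simp add: numeral_2_eq_2 toM_mult)
    have pow1: "toM Cm ^\<^sub>m 1 = toM Cm" by simp
    have kers: "mat_kernel (char_matrix cAJ l ^\<^sub>m 2) = mat_kernel (char_matrix cAJ l ^\<^sub>m 1)"
    proof -
      have "u \<in> mat_kernel (toM (Cm ** Cm)) \<longleftrightarrow> u \<in> mat_kernel (toM Cm)" for u
      proof (cases "u \<in> carrier_vec ?n")
        case True
        define x where "x = (fromV u :: complex^'n)"
        have u: "u = toV x" unfolding x_def using True by (simp add: toV_fromV)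
        have "toM (Cm ** Cm) *\<^sub>v u = toV (Cm *v (Cm *v x))"
          unfolding u by (simp add: toV_mult[symmetric] matrix_vector_mul_assoc)
        moreover have "toM Cm *\<^sub>v u = toV (Cm *v x)" unfolding u by (simp add: toV_mult)
        moreover have "Cm *v (Cm *v x) = 0 \<longleftrightarrow> Cm *v x = 0"
          using kerC[of l x] by (auto simp: Cmv)
        ultimately show ?thesis using True unfolding mat_kernel_def by (simp add: toV_zero_iff)
      next
        case False then show ?thesis unfolding mat_kernel_def by auto
      qed
      then show ?thesis unfolding chm pow2 pow1 by blast
    qed
    have "dim_gen_eigenspace cAJ l 2 = dim_gen_eigenspace cAJ l 1"
      unfolding dim_gen_eigenspace_def
      by (rule kernel_dim_eq[where n="CARD('n)", OF _ _ kers]) (use cAJc in auto)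
    then have "sum_list (map (\<lambda>n. min 1 n) (map fst [(n, e)\<leftarrow>n_as . e = l])) =
               sum_list (map (\<lambda>n. min 2 n) (map fst [(n, e)\<leftarrow>n_as . e = l]))"
      unfolding dim_gen_eigenspace[OF jnf] by simp
    from sum_list_min_eq[OF this] show ?thesis using kl by force
  qed
  have ones: "\<forall>x\<in>set n_as. fst x = 1"
  proof
    fix x assume x: "x \<in> set n_as"
    obtain k l where kl: "x = (k,l)" by force
    have "k \<noteq> 0" using n0 x kl by force
    then show "fst x = 1" using blocks[of k l] x kl by simp
  qed
  have Jdiag: "J $$ (i,j) = 0" if "i < ?n" "j < ?n" "i \<noteq> j" for i j
    unfolding J_def by (rule jordan_matrix_ones_diag[OF ones]) (use that sumn in auto)

  show ?thesis
    unfolding semisimple_def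
  proof (intro exI conjI)
    show "invertible P'" unfolding invertible_def using P'Q' Q'P' by blast
    show "diagonal_matrix J'" unfolding diagonal_matrix_def J'idx
      using Jdiag xi_less xi_inj by blast
    have "complexify A ** P' = P' ** J' ** (Q' ** P')"
      unfolding cA_def[symmetric] cAeq by (simp add: matrix_mul_assoc)
    then show "complexify A ** P' = P' ** J'" using Q'P' by simp
  qed
qed


end
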